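(* Let $S$ be a string of length $n$ and, for $1\le i\le n$, let $c_i$ be the center of the longest palindromic suffix of $S[1..i]$. Then the array $(\tilde b_1,\dots,\tilde b_n)$ with $\tilde b_i=2c_i-i$ is a counter array, i.e. $1\le \tilde b_i\le i$ for all $i$ and $\tilde b_{i+1}\ge \tilde b_i-1$ for all $1\le i<n$. Moreover, the map $(c_1,\dots,c_n)\mapsto(\tilde b_1,\dots,\tilde b_n)$ is injective.
   Context: The center of a substring $S[a..b]$ is $(a+b)/2$. A counter array of length $n$ is an integer array $(a_1,\dots,a_n)$ with $1\le a_i\le i$ for all $i$ and $a_{i+1}\ge a_i-1$ for all $1\le i<n$. *)

theory Defs
  imports Complex_Main
begin

text \<open>Strings are lists, positions are 1-based: S[a..b] is the substring
  from position a to position b (inclusive).\<close>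

definition substr :: "'a list \<Rightarrow> nat \<Rightarrow> nat \<Rightarrow> 'a list" where
  "substr S a b = take (b + 1 - a) (drop (a - 1) S)"

definition palindrome :: "'a list \<Rightarrow> bool" where
  "palindrome w \<longleftrightarrow> rev w = w"

text \<open>Start position of the longest palindromic suffix of S[1..i]
  (longest = smallest start position).\<close>
definition lps_start :: "'a list \<Rightarrow> nat \<Rightarrow> nat" where
  "lps_start S i = (LEAST a. 1 \<le> a \<and> a \<le> i \<and> palindrome (substr S a i))"

definition center :: "nat \<Rightarrow> nat \<Rightarrow> real" where
  "center a b = (real a + real b) / 2"

definition lps_center :: "'a list \<Rightarrow> nat \<Rightarrow> real" where
  "lps_center S i = center (lps_start S i) i"

definition center_array :: "'a list \<Rightarrow> real list" where
  "center_array S = map (lps_center S) [1..<length S + 1]"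

definition to_btilde :: "real list \<Rightarrow> real list" where
  "to_btilde cs = map (\<lambda>i. 2 * cs ! (i - 1) - real i) [1..<length cs + 1]"

definition counter_array :: "int list \<Rightarrow> bool" where
  "counter_array a \<longleftrightarrow>
     (\<forall>i. 1 \<le> i \<and> i \<le> length a \<longrightarrow> 1 \<le> a ! (i - 1) \<and> a ! (i - 1) \<le> int i) \<and>
     (\<forall>i. 1 \<le> i \<and> i < length a \<longrightarrow> a ! i \<ge> a ! (i - 1) - 1)"

end

theory Submission
  imports Defs
begin

lemma substr_len: "1 \<le> a \<Longrightarrow> b \<le> length S \<Longrightarrow> length (substr S a b) = b + 1 - a"
  unfolding substr_def by auto

lemma substr_nth: "1 \<le> a \<Longrightarrow> b \<le> length S \<Longrightarrow> j < b + 1 - a \<Longrightarrow> substr S a b ! j = S ! (a - 1 + j)"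
  unfolding substr_def by auto

lemma pal_substr:
  assumes "1 \<le> a" "b \<le> length S"
  shows "palindrome (substr S a b) \<longleftrightarrow> (\<forall>j. j < b + 1 - a \<longrightarrow> S ! (a - 1 + j) = S ! (b - 1 - j))"
proof -
  let ?w = "substr S a b"
  have "palindrome ?w \<longleftrightarrow> (\<forall>j < length ?w. rev ?w ! j = ?w ! j)"
    unfolding palindrome_def by (simp add: list_eq_iff_nth_eq)
  also have "\<dots> \<longleftrightarrow> (\<forall>j. j < b + 1 - a \<longrightarrow> S ! (a - 1 + j) = S ! (b - 1 - j))"
  proof -
    have "rev ?w ! j = S ! (b - 1 - j)" if "j < b + 1 - a" for j
    proof -
      have "rev ?w ! j = ?w ! (b + 1 - a - Suc j)" using that assms by (simp add: rev_nth substr_len)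
      also have "\<dots> = S ! (a - 1 + (b + 1 - a - Suc j))" using that assms by (simp add: substr_nth)
      also have "a - 1 + (b + 1 - a - Suc j) = b - 1 - j" using that assms by auto
      finally show ?thesis .
    qed
    then show ?thesis using assms by (auto simp: substr_len substr_nth)
  qed
  finally show ?thesis .
qed

lemma lps_bounds:
  assumes "1 \<le> i" "i \<le> length S"
  shows "1 \<le> lps_start S i \<and> lps_start S i \<le> i \<and> palindrome (substr S (lps_start S i) i)"
proof -
  have p: "1 \<le> i \<and> i \<le> i \<and> palindrome (substr S i i)"
    using assms by (subst pal_substr) auto
  show ?thesis unfolding lps_start_def
    by (rule LeastI2_wellorder[where P = "\<lambda>a. 1 \<le> a \<and> a \<le> i \<and> palindrome (substr S a i)", OF p]) auto
qed

lemma lps_le: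
  assumes "1 \<le> a" "a \<le> i" "palindrome (substr S a i)"
  shows "lps_start S i \<le> a"
  unfolding lps_start_def using assms by (intro Least_le) auto

lemma lps_step:
  assumes "1 \<le> i" "i + 1 \<le> length S"
  shows "lps_start S i \<le> lps_start S (i + 1) + 1"
proof -
  define a where "a = lps_start S (i + 1)"
  have A: "1 \<le> a" "a \<le> i + 1" "palindrome (substr S a (i + 1))"
    using lps_bounds[of "i+1" S] assms unfolding a_def by auto
  have B: "lps_start S i \<le> i" using lps_bounds[of i S] assms by auto
  show ?thesis
  proof (cases "a + 1 \<le> i")
    case False thus ?thesis using B unfolding a_def by auto
  next
    case True
    have P: "\<forall>j. j < i + 2 - a \<longrightarrow> S ! (a - 1 + j) = S ! (i - j)"
      using A(3) pal_substr[of a "i+1" S] A assms by auto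
    have "palindrome (substr S (a + 1) i)"
    proof (subst pal_substr)
      show "\<forall>j. j < i + 1 - (a + 1) \<longrightarrow> S ! (a + 1 - 1 + j) = S ! (i - 1 - j)"
      proof (intro allI impI)
        fix j assume "j < i + 1 - (a + 1)"
        hence "Suc j < i + 2 - a" by auto
        from P[rule_format, OF this] show "S ! (a + 1 - 1 + j) = S ! (i - 1 - j)"
          using A True by (simp add: algebra_simps)
      qed
    qed (use assms True in auto)
    hence "lps_start S i \<le> a + 1" using True A by (intro lps_le) auto
    thus ?thesis unfolding a_def by simp
  qed
qed

theorem lemma3p5:
  fixes S :: "'a list" and n :: nat
  assumes "length S = n"
  shows "(\<exists>b :: int list. map real_of_int b = to_btilde (center_array S) \<and> counter_array b)
         \<and> inj_on to_btilde {center_array T | T :: 'a list. length T = n}"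
proof
  define b where "b = map (\<lambda>i. int (lps_start S i)) [1..<n+1]"
  have lb: "length b = n" unfolding b_def by simp
  have bn: "\<And>k. k < n \<Longrightarrow> b ! k = int (lps_start S (k + 1))"
    unfolding b_def by (simp del: upt_Suc)
  have "map real_of_int b = to_btilde (center_array S)"
  proof (rule nth_equalityI)
    show "length (map real_of_int b) = length (to_btilde (center_array S))"
      using lb assms by (simp add: to_btilde_def center_array_def)
    fix k assume "k < length (map real_of_int b)"
    hence k: "k < n" using lb by simp
    show "map real_of_int b ! k = to_btilde (center_array S) ! k"
      using k assms bn[OF k] lb
      by (simp del: upt_Suc add: to_btilde_def center_array_def lps_center_def center_def field_simps)
  qed
  moreover have "counter_array b"
    unfolding counter_array_def
  proof (intro conjI allI impI)
    fix i assume i: "1 \<le> i \<and> i \<le> length b"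
    hence "b ! (i - 1) = int (lps_start S i)" using bn[of "i-1"] lb by auto
    thus "1 \<le> b ! (i - 1)" "b ! (i - 1) \<le> int i"
      using lps_bounds[of i S] i lb assms by auto
  next
    fix i assume i: "1 \<le> i \<and> i < length b"
    hence "b ! (i - 1) = int (lps_start S i)" "b ! i = int (lps_start S (i + 1))"
      using bn[of "i-1"] bn[of i] lb by auto
    thus "b ! (i - 1) - 1 \<le> b ! i" using lps_step[of i S] i lb assms by auto
  qed
  ultimately show "\<exists>b :: int list. map real_of_int b = to_btilde (center_array S) \<and> counter_array b"
    by blast
next
  show "inj_on to_btilde {center_array T | T :: 'a list. length T = n}"
  proof (rule inj_onI)
    fix x y :: "real list" assume H: "to_btilde x = to_btilde y"
    hence L: "length x = length y"
      by (metis length_map diff_add_inverse2 length_upt to_btilde_def)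
    have E: "\<And>k. k < length x \<Longrightarrow> to_btilde x ! k = to_btilde y ! k" using H by simp
    show "x = y"
    proof (rule nth_equalityI)
      show "length x = length y" by fact
      fix k assume k: "k < length x"
      from E[OF k] k L show "x ! k = y ! k"
        by (simp del: upt_Suc add: to_btilde_def)
    qed
  qed
qed

end
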